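(* Let $\varphi\neq0$ and $\phi$ be real numbers with $\sin^2\phi\neq1$, and $$M_A=\begin{pmatrix} i\cosh\varphi & e^{i\phi}\sinh\varphi\\ e^{-i\phi}\sinh\varphi & -i\cosh\varphi\end{pmatrix},\qquad M_B=\begin{pmatrix} i&0\\0&-i\end{pmatrix}.$$ Let $M_1,M_2,\dots$ be independent random matrices, each equal to $M_A$ or $M_B$ with probability $1/2$, and write $\Pi_n=M_1\cdots M_n=\begin{pmatrix}\alpha_n&\beta_n\\ \beta_n^*&\alpha_n^*\end{pmatrix}$. Then there is a constant $g>0$ (depending on $\varphi,\phi$) such that $$\mathbb{E}\left(\log|\alpha_n-\beta_n|\right)\sim g\sqrt{n}\qquad\text{as } n\to\infty .$$
   Context: $\mathbb{E}$ denotes expectation over the random choices of $M_1,\dots,M_n$. (Physically, $\frac{c}{3}\mathbb{E}(\log|\alpha_n-\beta_n|)$ is the averaged entanglement entropy growth of half of a randomly driven CFT of central charge $c$ at a type I exceptional point.) *)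

theory Defs
  imports "HOL-Analysis.Analysis" "HOL-Library.Landau_Symbols"
begin

definition mat2 :: "complex \<Rightarrow> complex \<Rightarrow> complex \<Rightarrow> complex \<Rightarrow> complex^2^2" where
  "mat2 a b c d = (\<chi> i j. if i = 1 then (if j = 1 then a else b) else (if j = 1 then c else d))"

definition MA :: "real \<Rightarrow> real \<Rightarrow> complex^2^2" where
  "MA vphi phi = mat2 (\<i> * cosh vphi) (cis phi * sinh vphi) (cis (- phi) * sinh vphi) (- \<i> * cosh vphi)"

definition MB :: "complex^2^2" where
  "MB = mat2 \<i> 0 0 (- \<i>)"

definition prodM :: "real \<Rightarrow> real \<Rightarrow> bool list \<Rightarrow> complex^2^2" where
  "prodM vphi phi xs = foldr (\<lambda>b P. (if b then MA vphi phi else MB) ** P) xs (mat 1)"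

definition ElogAB :: "real \<Rightarrow> real \<Rightarrow> nat \<Rightarrow> real" where
  "ElogAB vphi phi n =
     (\<Sum>xs\<in>{xs :: bool list. length xs = n}.
        ln (cmod (prodM vphi phi xs $ 1 $ 1 - prodM vphi phi xs $ 1 $ 2))) / 2 ^ n"

end

theory Submission
  imports Defs
begin
lemma mat2_nth: "mat2 a b c d $ 1 $ 1 = a" "mat2 a b c d $ 1 $ 2 = b" "mat2 a b c d $ 2 $ 1 = c" "mat2 a b c d $ 2 $ 2 = d"
  by (simp_all add: mat2_def)
lemma mat2_eq: "M = mat2 (M$1$1) (M$1$2) (M$2$1) (M$2$2)"
  by (simp add: mat2_def vec_eq_iff forall_2)
lemma mat2_mult: "mat2 a b c d ** mat2 e f g h = mat2 (a*e+b*g) (a*f+b*h) (c*e+d*g) (c*f+d*h)"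
  by (simp add: mat2_def matrix_matrix_mult_def vec_eq_iff forall_2 sum_2)
lemma mat2_one: "mat 1 = mat2 1 0 0 1"
  by (simp add: mat2_def mat_def vec_eq_iff forall_2)
lemma mat2_neg: "- mat2 a b c d = mat2 (-a) (-b) (-c) (-d)"
  by (simp add: mat2_def vec_eq_iff forall_2)
definition QQ :: "real \<Rightarrow> real \<Rightarrow> int \<Rightarrow> complex^2^2" where
 "QQ v p m = mat2 (of_real (cosh (real_of_int m * v))) (\<i> * cis p * of_real (sinh (real_of_int m * v))) (- \<i> * cis (-p) * of_real (sinh (real_of_int m * v))) (of_real (cosh (real_of_int m * v)))"

lemma cc: "complex_of_real (cosh x) * of_real (cosh x) = 1 + of_real (sinh x) * of_real (sinh x)"
proof -
  have "cosh x * cosh x = 1 + sinh x * sinh x" using cosh_square_eq[of x] by (simp add: power2_eq_square)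
  then show ?thesis by (metis of_real_1 of_real_add of_real_mult)
qed
lemma cisneg: "cis p * cis (-p) = 1" "cis (-p) * cis p = 1" by (simp_all add: cis_mult)

lemma chadd: "complex_of_real (cosh (x+y)) = of_real (cosh x) * of_real (cosh y) + of_real (sinh x) * of_real (sinh y)"
  by (simp add: cosh_add)
lemma shadd: "complex_of_real (sinh (x+y)) = of_real (sinh x) * of_real (cosh y) + of_real (cosh x) * of_real (sinh y)"
  by (simp add: sinh_add)

lemma AA: "MA v p ** MA v p = - mat 1"
  unfolding MA_def mat2_mult mat2_one mat2_neg
  apply (rule arg_cong4[where f=mat2])
  by (auto simp: algebra_simps cc cisneg)
lemma BQ: "MB = MA v p ** QQ v p 1"
  unfolding MA_def MB_def QQ_def mat2_mult
  apply (rule arg_cong4[where f=mat2])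
  by (auto simp: algebra_simps cc cisneg)

lemma AQ: "MA v p ** QQ v p m = QQ v p (-m) ** MA v p"
  unfolding MA_def QQ_def mat2_mult
  apply (rule arg_cong4[where f=mat2])
  by (auto simp: algebra_simps cc cisneg)

lemma QQQ: "QQ v p m ** QQ v p n = QQ v p (m+n)"
  unfolding QQ_def mat2_mult
  apply (rule arg_cong4[where f=mat2])
  by (auto simp: algebra_simps cc cisneg chadd shadd)
lemma mul_rneg: "(M::complex^2^2) ** (- N::complex^2^2) = - (M ** N)"
  apply (subst (1 2) mat2_eq[of M]) apply (subst (1 2) mat2_eq[of N])
  unfolding mat2_mult mat2_neg by (rule arg_cong4[where f=mat2]) (auto simp: algebra_simps)
lemma mul_lneg: "(- M::complex^2^2) ** (N::complex^2^2) = - (M ** N)"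
  apply (subst (1 2) mat2_eq[of M]) apply (subst (1 2) mat2_eq[of N])
  unfolding mat2_mult mat2_neg by (rule arg_cong4[where f=mat2]) (auto simp: algebra_simps)

definition GG :: "real \<Rightarrow> real \<Rightarrow> int \<Rightarrow> complex^2^2" where
  "GG v p k = (if even k then QQ v p (k div 2) else QQ v p (k div 2) ** MA v p)"

fun kap :: "bool list \<Rightarrow> int" where
  "kap [] = 0"
| "kap (b # xs) = (if b then 1 - kap xs else -1 - kap xs)"

lemma A_G: "MA v p ** GG v p k = GG v p (1-k) \<or> MA v p ** GG v p k = - GG v p (1-k)"
proof (cases "even k")
  case True
  then obtain m where k: "k = 2*m" by auto
  have d: "(1 - 2*m) div 2 = -m" by presburger
  have "MA v p ** GG v p k = GG v p (1-k)"
    using k d by (simp add: GG_def AQ)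
  then show ?thesis by blast
next
  case False
  then obtain m where k: "k = 2*m+1" by (metis odd_two_times_div_two_succ)
  have d: "- (2*m) div 2 = -m" by presburger
  have "MA v p ** GG v p k = MA v p ** (QQ v p m ** MA v p)"
    using k by (simp add: GG_def)
  also have "\<dots> = QQ v p (-m) ** (MA v p ** MA v p)" by (simp add: matrix_mul_assoc AQ)
  also have "\<dots> = - GG v p (1-k)" using k d by (simp add: AA mul_rneg GG_def)
  finally show ?thesis by blast
qed

lemma B_G: "MB ** GG v p k = GG v p (-1-k) \<or> MB ** GG v p k = - GG v p (-1-k)"
proof (cases "even k")
  case True
  then obtain m where k: "k = 2*m" by auto
  have d: "(-1 - 2*m) div 2 = -1-m" by presburger
  have "MB ** GG v p k = MA v p ** QQ v p (1 + m)"
    using k by (simp add: GG_def BQ[of v p] QQQ flip: matrix_mul_assoc)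
  also have "\<dots> = GG v p (-1-k)" using k d by (simp add: AQ GG_def)
  finally show ?thesis by blast
next
  case False
  then obtain m where k: "k = 2*m+1" by (metis odd_two_times_div_two_succ)
  have d: "(-2 - 2*m) div 2 = -1-m" by presburger
  have q: "QQ v p 1 ** (QQ v p m ** MA v p) = QQ v p (1+m) ** MA v p" by (simp add: matrix_mul_assoc QQQ)
  have "MB ** GG v p k = MA v p ** (QQ v p (1+m) ** MA v p)"
    using k q by (simp add: GG_def BQ[of v p] flip: matrix_mul_assoc)
  also have "\<dots> = QQ v p (-1-m) ** (MA v p ** MA v p)" by (simp add: matrix_mul_assoc AQ)
  also have "\<dots> = - GG v p (-1-k)" using k d by (simp add: AA mul_rneg GG_def)
  finally show ?thesis by blast
qed

lemma prodM_G: "prodM v p xs = GG v p (kap xs) \<or> prodM v p xs = - GG v p (kap xs)"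
proof (induction xs)
  case Nil
  then show ?case by (simp add: prodM_def GG_def QQ_def mat2_one)
next
  case (Cons b xs)
  have e: "prodM v p (b # xs) = (if b then MA v p else MB) ** prodM v p xs"
    by (simp add: prodM_def)
  show ?case
  proof (cases b)
    case True
    then show ?thesis using Cons A_G[of v p "kap xs"] unfolding e
      by (auto simp: mul_rneg)
  next
    case False
    then show ?thesis using Cons B_G[of v p "kap xs"] unfolding e
      by (auto simp: mul_rneg)
  qed
qed
lemma grow1:
  fixes P R :: complex
  assumes P: "P \<noteq> 0"
  shows "\<exists>T. \<forall>t\<ge>T. \<bar>ln (cmod (P * of_real (exp t) + R * of_real (exp (-t)))) - t\<bar> \<le> \<bar>ln (cmod P / 2)\<bar> + \<bar>ln (cmod P + cmod R)\<bar>"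
proof -
  define T where "T = max 0 (ln (2 * cmod R / cmod P))"
  have pP: "cmod P > 0" using P by simp
  { fix t :: real assume t: "t \<ge> T"
    have t0: "t \<ge> 0" using t T_def by simp
    have e1: "exp t \<ge> 1" using t0 by simp
    have e2: "exp t \<ge> 2 * cmod R / cmod P"
    proof (cases "R = 0")
      case True then show ?thesis by simp
    next
      case False
      then have "2 * cmod R / cmod P > 0" using pP by simp
      then have "exp (ln (2 * cmod R / cmod P)) = 2 * cmod R / cmod P" by simp
      moreover have "ln (2 * cmod R / cmod P) \<le> t" using t T_def by simp
      ultimately show ?thesis by (metis exp_le_cancel_iff)
    qed
    have em: "exp (-t) = 1 / exp t" by (simp add: exp_minus field_simps)
    have Rb: "cmod R * exp (-t) \<le> cmod P * exp t / 2"
    proof -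
      have "cmod R \<le> cmod P * exp t / 2" using e2 pP by (simp add: field_simps)
      also have "\<dots> \<le> cmod P * exp t / 2 * (exp t)" using mult_left_mono[OF e1, of "cmod P * exp t / 2"] pP by simp
      finally show ?thesis unfolding em by (simp add: field_simps)
    qed
    have n1: "cmod (P * exp t) = cmod P * exp t" by (simp add: norm_mult)
    have n2: "cmod (R * exp (-t)) = cmod R * exp (-t)" by (simp add: norm_mult)
    have lo: "cmod (P * exp t + R * exp (-t)) \<ge> cmod P / 2 * exp t"
      using norm_diff_ineq[of "P * exp t" "R * exp (-t)"] n1 n2 Rb by simp
    have "cmod R * exp (-t) \<le> cmod R * exp t" using t0 by (simp add: mult_left_mono)
    then have hi: "cmod (P * exp t + R * exp (-t)) \<le> (cmod P + cmod R) * exp t"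
      using norm_triangle_ineq[of "P * exp t" "R * exp (-t)"] n1 n2 by (simp add: algebra_simps)
    have pos: "cmod P / 2 * exp t > 0" using pP by simp
    have l1: "ln (cmod P / 2 * exp t) \<le> ln (cmod (P * exp t + R * exp (-t)))"
      using lo pos by (subst ln_le_cancel_iff) auto
    have l2: "ln (cmod (P * exp t + R * exp (-t))) \<le> ln ((cmod P + cmod R) * exp t)"
      using lo hi pos by (subst ln_le_cancel_iff) auto
    have l1': "ln (cmod P / 2 * exp t) = ln (cmod P / 2) + t" using pP ln_mult[of "cmod P / 2" "exp t"] by simp
    have l2': "ln ((cmod P + cmod R) * exp t) = ln (cmod P + cmod R) + t" using pP
      using add_pos_nonneg[OF pP norm_ge_zero[of R]] by (subst ln_mult) auto
    have "\<bar>ln (cmod (P * exp t + R * exp (-t))) - t\<bar> \<le> \<bar>ln (cmod P / 2)\<bar> + \<bar>ln (cmod P + cmod R)\<bar>"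
    proof -
      define X where "X = ln (cmod (P * exp t + R * exp (-t)))"
      have a1: "X - t \<le> ln (cmod P + cmod R)" using l2 l2' X_def by linarith
      have a2: "ln (cmod P / 2) \<le> X - t" using l1 l1' X_def by linarith
      have "X - t \<le> \<bar>ln (cmod P / 2)\<bar> + \<bar>ln (cmod P + cmod R)\<bar>"
        using a1 abs_ge_self[of "ln (cmod P + cmod R)"] abs_ge_zero[of "ln (cmod P / 2)"] by linarith
      moreover have "t - X \<le> \<bar>ln (cmod P / 2)\<bar> + \<bar>ln (cmod P + cmod R)\<bar>"
        using a2 abs_ge_minus_self[of "ln (cmod P / 2)"] abs_ge_zero[of "ln (cmod P + cmod R)"] by linarith
      ultimately show ?thesis unfolding X_def[symmetric] abs_le_iff by simp
    qed
  }
  then show ?thesis by (intro exI[of _ T]) simp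
qed

lemma grow2:
  fixes P R :: complex
  assumes P: "P \<noteq> 0" and R: "R \<noteq> 0"
  shows "\<exists>K T. \<forall>t. \<bar>t\<bar> \<ge> T \<longrightarrow> \<bar>ln (cmod (P * of_real (exp t) + R * of_real (exp (-t)))) - \<bar>t\<bar>\<bar> \<le> K"
proof -
  obtain T1 where T1: "\<forall>t\<ge>T1. \<bar>ln (cmod (P * of_real (exp t) + R * of_real (exp (-t)))) - t\<bar> \<le> \<bar>ln (cmod P / 2)\<bar> + \<bar>ln (cmod P + cmod R)\<bar>"
    using grow1[OF P, of R] by blast
  obtain T2 where T2: "\<forall>t\<ge>T2. \<bar>ln (cmod (R * of_real (exp t) + P * of_real (exp (-t)))) - t\<bar> \<le> \<bar>ln (cmod R / 2)\<bar> + \<bar>ln (cmod R + cmod P)\<bar>"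
    using grow1[OF R, of P] by blast
  define K where "K = (\<bar>ln (cmod P / 2)\<bar> + \<bar>ln (cmod P + cmod R)\<bar>) + (\<bar>ln (cmod R / 2)\<bar> + \<bar>ln (cmod R + cmod P)\<bar>)"
  define T where "T = max (max T1 T2) 1"
  have "\<bar>ln (cmod (P * of_real (exp t) + R * of_real (exp (-t)))) - \<bar>t\<bar>\<bar> \<le> K" if t: "\<bar>t\<bar> \<ge> T" for t
  proof (cases "t \<ge> 0")
    case True
    then have "t \<ge> T1" using t T_def by auto
    then show ?thesis using T1 True unfolding K_def by fastforce
  next
    case False
    then have "-t \<ge> T2" using t T_def by auto
    then have "\<bar>ln (cmod (R * of_real (exp (-t)) + P * of_real (exp (-(-t))))) - (-t)\<bar> \<le> \<bar>ln (cmod R / 2)\<bar> + \<bar>ln (cmod R + cmod P)\<bar>"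
      using T2 by blast
    then show ?thesis using False unfolding K_def by (simp add: add.commute)
  qed
  then show ?thesis by blast
qed

definition ell :: "real \<Rightarrow> real \<Rightarrow> int \<Rightarrow> complex" where
  "ell v p k = GG v p k $ 1 $ 1 - GG v p k $ 1 $ 2"

lemma ell_even: "even k \<Longrightarrow> ell v p k =
   (1 - \<i> * cis p) / 2 * of_real (exp (real_of_int (k div 2) * v)) + (1 + \<i> * cis p) / 2 * of_real (exp (- (real_of_int (k div 2) * v)))"
  unfolding ell_def GG_def QQ_def
  by (simp add: mat2_nth cosh_def sinh_def field_simps)

lemma ell_odd0: "odd k \<Longrightarrow> ell v p k =
   \<i> * of_real (cosh (real_of_int (k div 2 + 1) * v)) - cis p * of_real (sinh (real_of_int (k div 2 + 1) * v))"
proof -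
  have e: "real_of_int (k div 2 + 1) * v = real_of_int (k div 2) * v + v" by (simp add: algebra_simps)
  assume "odd k"
  then show ?thesis
  unfolding ell_def GG_def QQ_def MA_def mat2_mult e chadd shadd
  by (simp add: mat2_nth algebra_simps cisneg)
qed

lemma ell_odd: "odd k \<Longrightarrow> ell v p k =
   (\<i> - cis p) / 2 * of_real (exp (real_of_int (k div 2 + 1) * v)) + (\<i> + cis p) / 2 * of_real (exp (- (real_of_int (k div 2 + 1) * v)))"
  unfolding ell_odd0
  by (simp add: cosh_def sinh_def field_simps)

lemma coef_nz:
  assumes "(sin p)\<^sup>2 \<noteq> 1"
  shows "1 - \<i> * cis p \<noteq> 0" "1 + \<i> * cis p \<noteq> 0" "\<i> - cis p \<noteq> 0" "\<i> + cis p \<noteq> 0"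
proof -
  have s1: "sin p \<noteq> 1" "sin p \<noteq> -1" using assms by auto
  show "1 - \<i> * cis p \<noteq> 0" "1 + \<i> * cis p \<noteq> 0" "\<i> - cis p \<noteq> 0" "\<i> + cis p \<noteq> 0"
    using s1 by (auto simp: complex_eq_iff)
qed

lemma ell_bound:
  assumes v: "v \<noteq> 0" and p: "(sin p)\<^sup>2 \<noteq> 1"
  shows "\<exists>K. \<forall>k. \<bar>ln (cmod (ell v p k)) - \<bar>v\<bar> / 2 * \<bar>real_of_int k\<bar>\<bar> \<le> K"
proof -
  obtain K1 T1 where KT1: "\<forall>t. \<bar>t\<bar> \<ge> T1 \<longrightarrow> \<bar>ln (cmod ((1 - \<i> * cis p) / 2 * of_real (exp t) + (1 + \<i> * cis p) / 2 * of_real (exp (-t)))) - \<bar>t\<bar>\<bar> \<le> K1"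
    using grow2[of "(1 - \<i> * cis p) / 2" "(1 + \<i> * cis p) / 2"] coef_nz[OF p] by auto
  obtain K2 T2 where KT2: "\<forall>t. \<bar>t\<bar> \<ge> T2 \<longrightarrow> \<bar>ln (cmod ((\<i> - cis p) / 2 * of_real (exp t) + (\<i> + cis p) / 2 * of_real (exp (-t)))) - \<bar>t\<bar>\<bar> \<le> K2"
    using grow2[of "(\<i> - cis p) / 2" "(\<i> + cis p) / 2"] coef_nz[OF p] by auto
  define T where "T = max (max T1 T2) 0"
  define N :: int where "N = ceiling (2 * T / \<bar>v\<bar>) + 1"
  have vpos: "\<bar>v\<bar> > 0" using v by simp
  have NT: "\<bar>v\<bar> * (real_of_int N - 1) / 2 \<ge> T"
  proof -
    have "real_of_int N - 1 \<ge> 2 * T / \<bar>v\<bar>" unfolding N_def by linarith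
    then have "2 * T \<le> (real_of_int N - 1) * \<bar>v\<bar>" using pos_divide_le_eq[OF vpos] by blast
    then show ?thesis by (simp add: algebra_simps)
  qed
  define f where "f k = \<bar>ln (cmod (ell v p k)) - \<bar>v\<bar> / 2 * \<bar>real_of_int k\<bar>\<bar>" for k
  define K3 where "K3 = Max (f ` {-N..N})"
  have big: "f k \<le> max K1 (K2 + \<bar>v\<bar> / 2)" if k: "\<bar>k\<bar> \<ge> N" for k
  proof (cases "even k")
    case True
    define t where "t = real_of_int (k div 2) * v"
    have kk: "real_of_int k = 2 * real_of_int (k div 2)" using True by (metis dvd_mult_div_cancel of_int_mult of_int_numeral)
    have at: "\<bar>t\<bar> = \<bar>v\<bar> / 2 * \<bar>real_of_int k\<bar>" unfolding t_def kk by (simp add: abs_mult)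
    have "real_of_int \<bar>k\<bar> \<ge> real_of_int N" using k by linarith
    then have "\<bar>v\<bar> / 2 * \<bar>real_of_int k\<bar> \<ge> \<bar>v\<bar> * (real_of_int N - 1) / 2" using vpos
      by (simp add: mult_left_mono divide_right_mono)
    then have "\<bar>t\<bar> \<ge> T1" using at NT T_def by linarith
    then have "f k \<le> K1" using KT1 unfolding f_def ell_even[OF True] at[symmetric] t_def by blast
    then show ?thesis by simp
  next
    case False
    define m where "m = k div 2"
    define t where "t = real_of_int (m + 1) * v"
    have kk: "k = 2 * m + 1" unfolding m_def using False by presburger
    have d: "\<bar>\<bar>real_of_int (m+1)\<bar> - \<bar>real_of_int k\<bar> / 2\<bar> = 1/2" unfolding kk by (cases "m \<ge> 0") (auto simp: field_simps)
    have at: "\<bar>t\<bar> = \<bar>v\<bar> * \<bar>real_of_int (m+1)\<bar>" unfolding t_def by (simp add: abs_mult)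
    have at2: "\<bar>\<bar>t\<bar> - \<bar>v\<bar> / 2 * \<bar>real_of_int k\<bar>\<bar> = \<bar>v\<bar> / 2"
    proof -
      have "\<bar>t\<bar> - \<bar>v\<bar> / 2 * \<bar>real_of_int k\<bar> = \<bar>v\<bar> * (\<bar>real_of_int (m+1)\<bar> - \<bar>real_of_int k\<bar> / 2)"
        unfolding at by (simp add: algebra_simps)
      then show ?thesis using d by (simp add: abs_mult)
    qed
    have "real_of_int \<bar>k\<bar> \<ge> real_of_int N" using k by linarith
    then have "\<bar>v\<bar> * real_of_int N \<le> \<bar>v\<bar> * \<bar>real_of_int k\<bar>" using vpos by (simp add: mult_left_mono)
    moreover have "\<bar>v\<bar> * (real_of_int N - 1) / 2 + \<bar>v\<bar> / 2 = \<bar>v\<bar> * real_of_int N / 2" by (simp add: field_simps)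
    ultimately have "\<bar>v\<bar> / 2 * \<bar>real_of_int k\<bar> \<ge> \<bar>v\<bar> * (real_of_int N - 1) / 2 + \<bar>v\<bar> / 2" by linarith
    then have "\<bar>t\<bar> \<ge> T2" using at2 NT T_def by linarith
    then have "\<bar>ln (cmod (ell v p k)) - \<bar>t\<bar>\<bar> \<le> K2" using KT2 unfolding ell_odd[OF False] t_def m_def by blast
    then have "f k \<le> K2 + \<bar>v\<bar> / 2" unfolding f_def using at2 by linarith
    then show ?thesis by simp
  qed
  have small: "f k \<le> K3" if k: "\<bar>k\<bar> < N" for k
  proof -
    have "k \<in> {-N..N}" using k by auto
    then show ?thesis unfolding K3_def by (intro Max_ge) auto
  qed
  have "f k \<le> max (max K1 (K2 + \<bar>v\<bar> / 2)) K3" for k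
    using big[of k] small[of k] by (cases "\<bar>k\<bar> \<ge> N") auto
  then show ?thesis unfolding f_def by blast
qed

definition LL :: "nat \<Rightarrow> bool list set" where "LL n = {xs. length xs = n}"

lemma finLL: "finite (LL n)"
  using finite_lists_length_eq[of "UNIV :: bool set" n] unfolding LL_def by simp

lemma sumLL_Suc: "(\<Sum>xs\<in>LL (Suc n). (f xs :: real)) = (\<Sum>xs\<in>LL n. f (True # xs) + f (False # xs))"
proof -
  have e: "LL (Suc n) = Cons True ` LL n \<union> Cons False ` LL n"
    unfolding LL_def by (auto simp: length_Suc_conv image_iff)
  have "(\<Sum>xs\<in>LL (Suc n). f xs) = (\<Sum>xs\<in>Cons True ` LL n. f xs) + (\<Sum>xs\<in>Cons False ` LL n. f xs)"
    unfolding e by (rule sum.union_disjoint) (auto simp: finLL)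
  also have "\<dots> = (\<Sum>xs\<in>LL n. f (True # xs)) + (\<Sum>xs\<in>LL n. f (False # xs))"
    by (simp add: sum.reindex)
  finally show ?thesis by (simp add: sum.distrib)
qed

lemma sumLL_0: "(\<Sum>xs\<in>LL 0. (f xs :: real)) = f []"
proof -
  have "LL 0 = {[]}" unfolding LL_def by auto
  then show ?thesis by simp
qed

definition bn :: "nat \<Rightarrow> int \<Rightarrow> real" where
  "bn n j = (if 0 \<le> j \<and> j \<le> int n then real (n choose nat j) else 0)"

lemma bn_pascal: "bn (Suc n) j = bn n (j - 1) + bn n j"
proof -
  consider "j < 0" | "j = 0" | "j > 0 \<and> j \<le> int n" | "j = int n + 1" | "j > int n + 1" by linarith
  then show ?thesis
  proof cases
    case 3
    define i where "i = nat (j - 1)"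
    have i: "j = int (Suc i)" "i < n" using 3 i_def by auto
    have hh: "nat (1 + int i) = Suc i" by simp
    then show ?thesis unfolding bn_def using i by (auto simp: nat_int hh)
  next
    case 4
    have "nat (int n + 1) = Suc n" by simp
    then show ?thesis using 4 by (simp add: bn_def)
  qed (auto simp: bn_def)
qed

lemma bn_sym: "bn n j = bn n (int n - j)"
proof (cases "0 \<le> j \<and> j \<le> int n")
  case True
  then obtain i where i: "j = int i" "i \<le> n" by (metis nonneg_int_cases of_nat_le_iff)
  have "int n - j = int (n - i)" using i by simp
  then have "nat (int n - j) = n - i" by simp
  then show ?thesis unfolding bn_def using i by (simp add: binomial_symmetric[of i n])
qed (auto simp: bn_def)

definition qq :: "nat \<Rightarrow> int \<Rightarrow> real" where
  "qq n k = (if even (int n + k) then bn n ((int n + k) div 2) else 0)"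

lemma qq_step: "qq n (1 - k) + qq n (-1 - k) = qq (Suc n) k"
proof (cases "even (int n + 1 + k)")
  case False
  then show ?thesis unfolding qq_def by auto
next
  case True
  define a where "a = (int n + 1 + k) div 2"
  have ka: "int n + 1 + k = 2 * a" using True a_def by auto
  have e1: "(int n + (1 - k)) div 2 = int n - (a - 1)" using ka by presburger
  have e2: "(int n + (-1 - k)) div 2 = int n - a" using ka by presburger
  have p1: "even (int n + (1 - k))" "even (int n + (-1 - k))" using ka by presburger+
  have "qq n (1 - k) + qq n (-1 - k) = bn n (int n - (a - 1)) + bn n (int n - a)"
    unfolding qq_def using p1 e1 e2 by simp
  also have "\<dots> = bn n (a - 1) + bn n a" using bn_sym[of n "a-1"] bn_sym[of n a] by simp
  also have "\<dots> = bn (Suc n) a" by (simp add: bn_pascal)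
  also have "\<dots> = qq (Suc n) k" unfolding qq_def a_def using True by (simp add: ac_simps)
  finally show ?thesis .
qed

definition CC :: "nat \<Rightarrow> int \<Rightarrow> real" where
  "CC n k = (\<Sum>xs\<in>LL n. if kap xs = k then 1 else 0)"

lemma CC_qq: "CC n k = qq n k"
proof (induction n arbitrary: k)
  case 0
  then show ?case unfolding CC_def qq_def bn_def by (simp add: sumLL_0) presburger
next
  case (Suc n)
  have "CC (Suc n) k = CC n (1 - k) + CC n (-1 - k)"
    unfolding CC_def sumLL_Suc by (simp add: sum.distrib eq_commute[of _ k] algebra_simps)
  then show ?case using Suc qq_step by simp
qed



definition ES :: "nat \<Rightarrow> real" where
  "ES n = (\<Sum>xs\<in>LL n. \<bar>real_of_int (kap xs)\<bar>) / 2 ^ n"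

lemma abs_step: "\<bar>1 - real_of_int k\<bar> + \<bar>-1 - real_of_int k\<bar> = 2 * \<bar>real_of_int k\<bar> + 2 * (if k = 0 then 1 else 0)"
  by (cases "k = 0"; cases "k > 0") auto

lemma ES_Suc: "ES (Suc n) = ES n + CC n 0 / 2 ^ n"
proof -
  have "(\<Sum>xs\<in>LL (Suc n). \<bar>real_of_int (kap xs)\<bar>) = (\<Sum>xs\<in>LL n. 2 * \<bar>real_of_int (kap xs)\<bar> + 2 * (if kap xs = 0 then 1 else 0))"
    unfolding sumLL_Suc by (rule sum.cong) (simp_all add: abs_step)
  also have "\<dots> = 2 * (\<Sum>xs\<in>LL n. \<bar>real_of_int (kap xs)\<bar>) + 2 * CC n 0"
    unfolding CC_def by (simp add: sum.distrib sum_distrib_left)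
  finally show ?thesis unfolding ES_def by (simp add: field_simps)
qed

definition rr :: "nat \<Rightarrow> real" where "rr j = real ((2*j) choose j) / 4 ^ j"

lemma CC_even: "CC (2*j) 0 = real ((2*j) choose j)"
  unfolding CC_qq qq_def bn_def by simp

lemma CC_odd: "CC (Suc (2*j)) 0 = 0"
  unfolding CC_qq qq_def by simp

lemma alg_aux:
  fixes x y z j :: nat
  assumes a: "Suc (Suc (2*j)) * y = x * Suc j" and b: "Suc (2*j) * z = y * Suc j"
  shows "x * Suc j = 2 * Suc (2*j) * z"
proof -
  have "x * Suc j * Suc j = Suc (Suc (2*j)) * y * Suc j" using a by simp
  also have "\<dots> = Suc (Suc (2*j)) * (y * Suc j)" by (simp only: mult.assoc)
  also have "\<dots> = Suc (Suc (2*j)) * (Suc (2*j) * z)" using b by simp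
  also have "\<dots> = 2 * Suc (2*j) * z * Suc j" by (simp add: algebra_simps)
  finally show ?thesis by (metis mult_right_cancel nat.distinct(1))
qed

lemma central_rec_nat: "(Suc (Suc (2*j)) choose Suc j) * Suc j = 2 * Suc (2*j) * ((2*j) choose j)"
proof -
  have a: "Suc (Suc (2*j)) * (Suc (2*j) choose j) = (Suc (Suc (2*j)) choose Suc j) * Suc j" by (rule Suc_times_binomial_eq)
  have b0: "Suc (2*j) * ((2*j) choose j) = (Suc (2*j) choose Suc j) * Suc j" by (rule Suc_times_binomial_eq)
  have c: "Suc (2*j) choose (Suc j) = Suc (2*j) choose j"
    using binomial_symmetric[of "Suc j" "Suc (2*j)"] by simp
  have b: "Suc (2*j) * ((2*j) choose j) = (Suc (2*j) choose j) * Suc j"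
    using b0 unfolding c .
  show ?thesis using alg_aux[OF a b] .
qed

lemma central_rec: "real (Suc (Suc (2*j)) choose Suc j) * real (Suc j) = 2 * real (Suc (2*j)) * real ((2*j) choose j)"
proof -
  have "real ((Suc (Suc (2*j)) choose Suc j) * Suc j) = real (2 * Suc (2*j) * ((2*j) choose j))"
    using central_rec_nat by presburger
  then show ?thesis unfolding of_nat_mult by simp
qed

lemma fr: "(a::real) > 0 \<Longrightarrow> b > 0 \<Longrightarrow> (2 * c * Z / a) / (4 * b) = Z / b * c / (2 * a)" by (simp add: field_simps)

lemma rr_Suc: "rr (Suc j) = rr j * (2 * j + 1) / (2 * j + 2)"
proof -
  have e: "2 * Suc j = Suc (Suc (2*j))" by simp
  have r1: "rr (Suc j) = real (Suc (Suc (2*j)) choose Suc j) / 4 ^ Suc j" unfolding rr_def e by (rule refl)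
  have r0: "rr j = real ((2*j) choose j) / 4 ^ j" unfolding rr_def by (rule refl)
  have main: "X / 4 ^ Suc j = Z / 4 ^ j * real (Suc (2*j)) / (2 * real (Suc j))"
    if "X * real (Suc j) = 2 * real (Suc (2*j)) * Z" for X Z :: real
  proof -
    have hx: "X = 2 * real (Suc (2*j)) * Z / real (Suc j)" using that by (simp add: eq_divide_eq)
    have "(4::real) ^ Suc j = 4 * 4 ^ j" by simp
    then show ?thesis unfolding hx by (simp only: fr[of "real (Suc j)" "4 ^ j"] of_nat_0_less_iff zero_less_Suc zero_less_power zero_less_numeral)
  qed
  have "rr (Suc j) = rr j * real (Suc (2*j)) / (2 * real (Suc j))" unfolding r1 r0 by (rule main[OF central_rec])
  then show ?thesis by simp
qed

lemma rr_Suc': "real (Suc (2*j)) * rr j = real (2 * Suc j) * rr (Suc j)"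
proof -
  have p: "(2 * real j + 2) > 0" by simp
  have "real (2 * Suc j) * rr (Suc j) = (2 * real j + 2) * (rr j * (2 * real j + 1) / (2 * real j + 2))"
    unfolding rr_Suc by simp
  also have "\<dots> = rr j * (2 * real j + 1)" using p by simp
  finally show ?thesis by simp
qed

lemma ES_formula: "ES (2*j) = real (2*j) * rr j \<and> ES (Suc (2*j)) = real (Suc (2*j)) * rr j"
proof (induction j)
  case 0
  have "ES 0 = 0" by (simp add: ES_def sumLL_0)
  moreover have "CC 0 0 = 1" by (simp add: CC_def sumLL_0)
  ultimately show ?case using ES_Suc[of 0] by (simp add: rr_def)
next
  case (Suc j)
  have e1: "ES (2 * Suc j) = real (2 * Suc j) * rr (Suc j)"
  proof -
    have "ES (2 * Suc j) = ES (Suc (Suc (2*j)))" by simp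
    also have "\<dots> = ES (Suc (2*j))" using ES_Suc[of "Suc (2*j)"] CC_odd[of j] by simp
    also have "\<dots> = real (Suc (2*j)) * rr j" using Suc by blast
    also have "\<dots> = real (2 * Suc j) * rr (Suc j)" by (rule rr_Suc')
    finally show ?thesis .
  qed
  have e2: "ES (Suc (2 * Suc j)) = real (Suc (2 * Suc j)) * rr (Suc j)"
  proof -
    have "ES (Suc (2 * Suc j)) = ES (2 * Suc j) + CC (2 * Suc j) 0 / 2 ^ (2 * Suc j)" by (rule ES_Suc)
    also have "CC (2 * Suc j) 0 / 2 ^ (2 * Suc j) = rr (Suc j)"
      unfolding CC_even rr_def by (simp add: power_mult del: binomial_Suc_Suc)
    finally have "ES (Suc (2 * Suc j)) = real (2 * Suc j) * rr (Suc j) + rr (Suc j)" using e1 by simp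
    then show ?thesis by (simp add: algebra_simps del: binomial_Suc_Suc)
  qed
  show ?case using e1 e2 by blast
qed

lemma ES_eq: "ES n = real n * rr (n div 2)"
proof -
  have h: "n = 2*(n div 2) \<or> n = Suc (2*(n div 2))" by presburger
  show ?thesis
  proof (cases "n = 2*(n div 2)")
    case True
    then show ?thesis using ES_formula[of "n div 2"] by metis
  next
    case False
    then have "n = Suc (2*(n div 2))" using h by blast
    then show ?thesis using ES_formula[of "n div 2"] by metis
  qed
qed
lemma rr_nonneg: "rr j \<ge> 0" unfolding rr_def by simp

lemma rr_bound: "real (Suc j) * (rr j)^2 \<le> 1"
proof (induction j)
  case 0
  then show ?case by (simp add: rr_def)
next
  case (Suc j)
  have ineq: "real (Suc (Suc j)) * (2 * real j + 1)^2 \<le> real (Suc j) * (2 * real j + 2)^2"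
    by (simp add: power2_eq_square algebra_simps)
  have p: "(2 * real j + 2) > 0" by simp
  have "real (Suc (Suc j)) * (rr (Suc j))^2 = (rr j)^2 * (real (Suc (Suc j)) * (2 * real j + 1)^2) / (2 * real j + 2)^2"
    using p unfolding rr_Suc power2_eq_square by (simp add: field_simps)
  also have "\<dots> \<le> (rr j)^2 * (real (Suc j) * (2 * real j + 2)^2) / (2 * real j + 2)^2"
    by (intro divide_right_mono mult_left_mono ineq) auto
  also have "\<dots> = real (Suc j) * (rr j)^2" using p by simp
  finally show ?case using Suc by linarith
qed

definition ss :: "nat \<Rightarrow> real" where "ss j = real j * (rr j)^2"

lemma ss_mono: "ss j \<le> ss (Suc j)"
proof -
  have ineq: "real j * (2 * real j + 2)^2 \<le> real (Suc j) * (2 * real j + 1)^2"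
    by (simp add: power2_eq_square algebra_simps)
  have p: "(2 * real j + 2) > 0" by simp
  have "ss j = (rr j)^2 * (real j * (2 * real j + 2)^2) / (2 * real j + 2)^2"
    unfolding ss_def using p by simp
  also have "\<dots> \<le> (rr j)^2 * (real (Suc j) * (2 * real j + 1)^2) / (2 * real j + 2)^2"
    by (intro divide_right_mono mult_left_mono ineq) auto
  also have "\<dots> = ss (Suc j)"
    using p unfolding ss_def rr_Suc power2_eq_square by (simp add: field_simps)
  finally show ?thesis .
qed

lemma ss_le1: "ss j \<le> 1"
  using rr_bound[of j] unfolding ss_def by (smt (verit) mult_right_mono of_nat_Suc zero_le_power2)

lemma ss_conv: "\<exists>L. ss \<longlonglongrightarrow> L \<and> L \<ge> 1/4"
proof -
  have inc: "incseq ss" using ss_mono by (simp add: incseq_SucI)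
  have bdd: "bdd_above (range ss)" using ss_le1 by (auto intro!: bdd_aboveI)
  have lim: "ss \<longlonglongrightarrow> (SUP i. ss i)" by (rule LIMSEQ_incseq_SUP[OF bdd inc])
  have "ss 1 = 1/4" by (simp add: ss_def rr_def power2_eq_square)
  moreover have "ss 1 \<le> (SUP i. ss i)" by (rule cSUP_upper[OF _ bdd]) simp
  ultimately show ?thesis using lim by auto
qed
lemma div2_filterlim: "filterlim (\<lambda>n::nat. n div 2) sequentially sequentially"
  unfolding filterlim_at_top
proof
  fix Z :: nat
  show "eventually (\<lambda>n. Z \<le> n div 2) sequentially"
    by (rule eventually_sequentiallyI[of "2*Z"]) simp
qed

lemma ES_lim: "\<exists>L. (\<lambda>n. ES n / sqrt (real n)) \<longlonglongrightarrow> sqrt (2 * L) \<and> L \<ge> 1/4"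
proof -
  obtain L where L: "ss \<longlonglongrightarrow> L" "L \<ge> 1/4" using ss_conv by blast
  have rr0: "(\<lambda>j. (rr j)^2) \<longlonglongrightarrow> 0"
  proof (rule tendsto_sandwich[of "\<lambda>_. 0" _ _ "\<lambda>j. 1 / real (Suc j)"])
    show "\<forall>\<^sub>F j in sequentially. 0 \<le> (rr j)^2" by simp
    show "\<forall>\<^sub>F j in sequentially. (rr j)^2 \<le> 1 / real (Suc j)"
      using rr_bound by (auto simp: field_simps)
    show "(\<lambda>j. 1 / real (Suc j)) \<longlonglongrightarrow> 0" by (rule LIMSEQ_Suc[OF lim_const_over_n])
  qed simp
  have u: "(\<lambda>j. ss j + (rr j)^2) \<longlonglongrightarrow> L" using tendsto_add[OF L(1) rr0] by simp
  have a1: "(\<lambda>n. 2 * ss (n div 2)) \<longlonglongrightarrow> 2 * L"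
    by (intro tendsto_mult tendsto_const filterlim_compose[OF L(1) div2_filterlim])
  have a2: "(\<lambda>n. 2 * (ss (n div 2) + (rr (n div 2))^2)) \<longlonglongrightarrow> 2 * L"
    using filterlim_compose[OF u div2_filterlim] by (intro tendsto_mult tendsto_const) simp
  have x: "(\<lambda>n. real n * (rr (n div 2))^2) \<longlonglongrightarrow> 2 * L"
  proof (rule tendsto_sandwich[OF _ _ a1 a2])
    show "\<forall>\<^sub>F n in sequentially. 2 * ss (n div 2) \<le> real n * (rr (n div 2))^2"
    proof (rule always_eventually, rule allI)
      fix n :: nat
      have "real (2 * (n div 2)) \<le> real n" by simp
      then have "real (2 * (n div 2)) * (rr (n div 2))^2 \<le> real n * (rr (n div 2))^2"
        by (rule mult_right_mono) simp
      then show "2 * ss (n div 2) \<le> real n * (rr (n div 2))^2"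
        unfolding ss_def by simp
    qed
    show "\<forall>\<^sub>F n in sequentially. real n * (rr (n div 2))^2 \<le> 2 * (ss (n div 2) + (rr (n div 2))^2)"
    proof (rule always_eventually, rule allI)
      fix n :: nat
      have "real n \<le> 2 * real (n div 2) + 2" by linarith
      then have "real n * (rr (n div 2))^2 \<le> (2 * real (n div 2) + 2) * (rr (n div 2))^2"
        by (simp add: mult_right_mono)
      then show "real n * (rr (n div 2))^2 \<le> 2 * (ss (n div 2) + (rr (n div 2))^2)"
        unfolding ss_def by (simp add: algebra_simps)
    qed
  qed
  have eq: "ES n / sqrt (real n) = sqrt (real n * (rr (n div 2))^2)" for n
  proof -
    have "real n * rr (n div 2) / sqrt (real n) = (real n / sqrt (real n)) * rr (n div 2)" by simp
    also have "\<dots> = sqrt (real n) * rr (n div 2)" by (simp add: real_div_sqrt)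
    finally show ?thesis unfolding ES_eq using rr_nonneg[of "n div 2"]
      by (simp add: real_sqrt_mult)
  qed
  have "(\<lambda>n. ES n / sqrt (real n)) \<longlonglongrightarrow> sqrt (2 * L)"
    unfolding eq by (rule tendsto_real_sqrt[OF x])
  then show ?thesis using L(2) by blast
qed
lemma Elog_eq: "ElogAB v p n = (\<Sum>xs\<in>LL n. ln (cmod (ell v p (kap xs)))) / 2 ^ n"
proof -
  have "ln (cmod (prodM v p xs $ 1 $ 1 - prodM v p xs $ 1 $ 2)) = ln (cmod (ell v p (kap xs)))" for xs
  proof -
    have "cmod (prodM v p xs $ 1 $ 1 - prodM v p xs $ 1 $ 2) = cmod (ell v p (kap xs))"
      using prodM_G[of v p xs]
    proof
      assume "prodM v p xs = GG v p (kap xs)"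
      then show ?thesis by (simp add: ell_def)
    next
      assume h: "prodM v p xs = - GG v p (kap xs)"
      have "cmod (- (GG v p (kap xs) $ 1 $ 1) - - (GG v p (kap xs) $ 1 $ 2)) = cmod (ell v p (kap xs))"
        unfolding ell_def by (metis minus_diff_eq minus_diff_minus norm_minus_cancel)
      then show ?thesis using h by simp
    qed
    then show ?thesis by simp
  qed
  then show ?thesis unfolding ElogAB_def LL_def by simp
qed

lemma cardLL: "card (LL n) = 2 ^ n"
  using card_lists_length_eq[of "UNIV :: bool set" n] unfolding LL_def by simp

lemma decomp:
  assumes K: "\<forall>k. \<bar>ln (cmod (ell v p k)) - c * \<bar>real_of_int k\<bar>\<bar> \<le> K"
  shows "\<bar>ElogAB v p n - c * ES n\<bar> \<le> K"
proof -
  have eq: "ElogAB v p n - c * ES n = (\<Sum>xs\<in>LL n. ln (cmod (ell v p (kap xs))) - c * \<bar>real_of_int (kap xs)\<bar>) / 2 ^ n"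
    unfolding Elog_eq ES_def by (simp add: sum_subtractf sum_distrib_left diff_divide_distrib)
  have bd: "\<bar>\<Sum>xs\<in>LL n. ln (cmod (ell v p (kap xs))) - c * \<bar>real_of_int (kap xs)\<bar>\<bar> \<le> 2 ^ n * K"
  proof -
    have "\<bar>\<Sum>xs\<in>LL n. ln (cmod (ell v p (kap xs))) - c * \<bar>real_of_int (kap xs)\<bar>\<bar> \<le> (\<Sum>xs\<in>LL n. \<bar>ln (cmod (ell v p (kap xs))) - c * \<bar>real_of_int (kap xs)\<bar>\<bar>)"
      by (rule sum_abs)
    also have "\<dots> \<le> (\<Sum>xs\<in>LL n. K)" using K by (intro sum_mono) blast
    also have "\<dots> = 2 ^ n * K" by (simp add: cardLL)
    finally show ?thesis .
  qed
  have pos: "(0::real) < 2 ^ n" by simp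
  show ?thesis unfolding eq abs_divide using bd pos by (simp add: pos_divide_le_eq mult.commute)
qed
theorem mainTheorem7:
  fixes vphi phi :: real
  assumes "vphi \<noteq> 0" and "(sin phi)\<^sup>2 \<noteq> 1"
  shows "\<exists>g::real. g > 0 \<and> (\<lambda>n. ElogAB vphi phi n) \<sim>[at_top] (\<lambda>n. g * sqrt (real n))"
proof -
  obtain K where K: "\<forall>k. \<bar>ln (cmod (ell vphi phi k)) - \<bar>vphi\<bar> / 2 * \<bar>real_of_int k\<bar>\<bar> \<le> K"
    using ell_bound[OF assms] by blast
  obtain L where L: "(\<lambda>n. ES n / sqrt (real n)) \<longlonglongrightarrow> sqrt (2 * L)" "L \<ge> 1/4"
    using ES_lim by blast
  define c where "c = \<bar>vphi\<bar> / 2"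
  define g where "g = c * sqrt (2 * L)"
  have cpos: "c > 0" using assms(1) c_def by simp
  have gpos: "g > 0" unfolding g_def using cpos L(2) by simp
  have D: "\<bar>ElogAB vphi phi n - c * ES n\<bar> \<le> K" for n
    using decomp[of vphi phi c K n] K unfolding c_def by blast
  have Ks: "(\<lambda>n. K / sqrt (real n)) \<longlonglongrightarrow> 0"
    by (rule tendsto_divide_0[OF tendsto_const filterlim_at_top_imp_at_infinity[OF filterlim_compose[OF sqrt_at_top filterlim_real_sequentially]]])
  have Ks': "(\<lambda>n. - K / sqrt (real n)) \<longlonglongrightarrow> 0"
    by (rule tendsto_divide_0[OF tendsto_const filterlim_at_top_imp_at_infinity[OF filterlim_compose[OF sqrt_at_top filterlim_real_sequentially]]])
  have lim0: "(\<lambda>n. (ElogAB vphi phi n - c * ES n) / sqrt (real n)) \<longlonglongrightarrow> 0"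
  proof (rule tendsto_sandwich[OF _ _ Ks' Ks])
    show "\<forall>\<^sub>F n in sequentially. - K / sqrt (real n) \<le> (ElogAB vphi phi n - c * ES n) / sqrt (real n)"
    proof (intro always_eventually allI divide_right_mono)
      fix n show "- K \<le> ElogAB vphi phi n - c * ES n" using D[of n] by linarith
    qed simp
    show "\<forall>\<^sub>F n in sequentially. (ElogAB vphi phi n - c * ES n) / sqrt (real n) \<le> K / sqrt (real n)"
      using D by (intro always_eventually allI divide_right_mono) (auto simp: abs_le_iff)
  qed
  have eq: "ElogAB vphi phi n / sqrt (real n) = c * (ES n / sqrt (real n)) + (ElogAB vphi phi n - c * ES n) / sqrt (real n)" for n
    by (simp add: diff_divide_distrib)
  have lim: "(\<lambda>n. ElogAB vphi phi n / sqrt (real n)) \<longlonglongrightarrow> g"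
    unfolding eq g_def using tendsto_add[OF tendsto_mult[OF tendsto_const L(1)] lim0, of c] by simp
  have "(\<lambda>n. ElogAB vphi phi n / sqrt (real n) / g) \<longlonglongrightarrow> g / g"
    by (rule tendsto_divide[OF lim tendsto_const]) (use gpos in simp)
  then have "(\<lambda>n. ElogAB vphi phi n / (g * sqrt (real n))) \<longlonglongrightarrow> 1"
    using gpos by (simp add: field_simps)
  then have "(\<lambda>n. ElogAB vphi phi n) \<sim>[at_top] (\<lambda>n. g * sqrt (real n))"
    by (rule asymp_equivI')
  then show ?thesis using gpos by blast
qed
end
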